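(* Let $N\in\{1,2\}$, let $\lambda_1,\dots,\lambda_N$ be distinct real numbers and $\mu_1,\dots,\mu_N$ nonzero real constants, and let $\bar F_j$ ($1\le j\le N$) and $F_m$ ($1\le m\le 2N$) be the functions on $\mathbb{R}^{6N}$ defined below. Consider the $3N\times3N$ matrix \[D(N)=\begin{pmatrix}(\mathrm{grad}_{P_1}\bar F_1)^T&(\mathrm{grad}_{P_2}\bar F_1)^T&(\mathrm{grad}_{P_3}\bar F_1)^T\\ \vdots&\vdots&\vdots\\ (\mathrm{grad}_{P_1}\bar F_N)^T&(\mathrm{grad}_{P_2}\bar F_N)^T&(\mathrm{grad}_{P_3}\bar F_N)^T\\ (\mathrm{grad}_{P_1}F_1)^T&(\mathrm{grad}_{P_2}F_1)^T&(\mathrm{grad}_{P_3}F_1)^T\\ \vdots&\vdots&\vdots\\ (\mathrm{grad}_{P_1}F_{2N})^T&(\mathrm{grad}_{P_2}F_{2N})^T&(\mathrm{grad}_{P_3}F_{2N})^T\end{pmatrix},\] where $\mathrm{grad}_{P_i}G=(\frac{\partial G}{\partial\phi_{i1}},\dots,\frac{\partial G}{\partial\phi_{iN}})^T$. Then $\det D(N)$ is not identically zero on $\mathbb{R}^{6N}$; consequently the integrals of motion $\bar F_j$, $1\le j\le N$, and $F_m$, $1\le m\le 2N$, are independent at least on some region of $\mathbb{R}^{6N}$.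
   Context: Coordinates on $\mathbb{R}^{6N}$: $\phi_{ij},\psi_{ij}$ ($i=1,2,3$, $j=1,\dots,N$); $P_i=(\phi_{i1},\dots,\phi_{iN})^T$, $Q_i=(\psi_{i1},\dots,\psi_{iN})^T$; $A=\mathrm{diag}(\lambda_1,\dots,\lambda_N)$, $B=\mathrm{diag}(\mu_1,\dots,\mu_N)$; $\langle\cdot,\cdot\rangle$ the standard inner product on $\mathbb{R}^N$. $\bar F_j=\sum_{i=1}^3\phi_{ij}\psi_{ij}$. $F_1=-8(\langle P_1,BQ_1\rangle-\langle P_3,BQ_3\rangle)$ and for $m\ge2$: $F_m=4\sum_{i=1}^{m-1}\big[(\langle A^{i-1}P_1,BQ_1\rangle-\langle A^{i-1}P_3,BQ_3\rangle)(\langle A^{m-i-1}P_1,BQ_1\rangle-\langle A^{m-i-1}P_3,BQ_3\rangle)+2(\langle A^{i-1}P_1,BQ_2\rangle+\langle A^{i-1}P_2,BQ_3\rangle)(\langle A^{m-i-1}P_2,BQ_1\rangle+\langle A^{m-i-1}P_3,BQ_2\rangle)\big]-8(\langle A^{m-1}P_1,BQ_1\rangle-\langle A^{m-1}P_3,BQ_3\rangle)$. *)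

theory Defs
  imports Complex_Main "HOL-Analysis.Derivative" "Jordan_Normal_Form.Determinant"
begin

text \<open>Coordinates on R^(6N): phi i j and psi i j, with i in {1,2,3}, j in {1..N}
  (1-based; values at other indices are irrelevant).
  lam j and mu j (j in {1..N}) are the diagonal entries of A and B.\<close>

text \<open>The pairing < A^k P_a , B Q_b > = sum_{j=1..N} (lam_j^k phi_{aj}) (mu_j psi_{bj}).\<close>
definition pairAB :: "nat \<Rightarrow> (nat \<Rightarrow> real) \<Rightarrow> (nat \<Rightarrow> real) \<Rightarrow> nat \<Rightarrow> nat \<Rightarrow> nat
    \<Rightarrow> (nat \<Rightarrow> nat \<Rightarrow> real) \<Rightarrow> (nat \<Rightarrow> nat \<Rightarrow> real) \<Rightarrow> real" where
  "pairAB N lam mu k a b phi psi = (\<Sum>j=1..N. (lam j ^ k * phi a j) * (mu j * psi b j))"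

definition Fbar :: "nat \<Rightarrow> (nat \<Rightarrow> nat \<Rightarrow> real) \<Rightarrow> (nat \<Rightarrow> nat \<Rightarrow> real) \<Rightarrow> real" where
  "Fbar j phi psi = (\<Sum>i=1..3. phi i j * psi i j)"

definition Fm :: "nat \<Rightarrow> (nat \<Rightarrow> real) \<Rightarrow> (nat \<Rightarrow> real) \<Rightarrow> nat
    \<Rightarrow> (nat \<Rightarrow> nat \<Rightarrow> real) \<Rightarrow> (nat \<Rightarrow> nat \<Rightarrow> real) \<Rightarrow> real" where
  "Fm N lam mu m phi psi =
    (let p = (\<lambda>k a b. pairAB N lam mu k a b phi psi) in
     if m = 1 then -8 * (p 0 1 1 - p 0 3 3)
     else 4 * (\<Sum>i=1..m-1.
              (p (i-1) 1 1 - p (i-1) 3 3) * (p (m-i-1) 1 1 - p (m-i-1) 3 3)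
            + 2 * (p (i-1) 1 2 + p (i-1) 2 3) * (p (m-i-1) 2 1 + p (m-i-1) 3 2))
          - 8 * (p (m-1) 1 1 - p (m-1) 3 3))"

definition dphi :: "((nat \<Rightarrow> nat \<Rightarrow> real) \<Rightarrow> (nat \<Rightarrow> nat \<Rightarrow> real) \<Rightarrow> real)
    \<Rightarrow> nat \<Rightarrow> nat \<Rightarrow> (nat \<Rightarrow> nat \<Rightarrow> real) \<Rightarrow> (nat \<Rightarrow> nat \<Rightarrow> real) \<Rightarrow> real" where
  "dphi G i j phi psi = deriv (\<lambda>t. G (phi(i := (phi i)(j := t))) psi) (phi i j)"

text \<open>The 3N x 3N matrix D(N) (0-based row r, column c).  Rows 0..N-1: Fbar_1..Fbar_N;
  rows N..3N-1: F_1..F_{2N}.  Column c = (i-1)*N + (j-1) holds d/d phi_{ij}.\<close>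
definition DN :: "nat \<Rightarrow> (nat \<Rightarrow> real) \<Rightarrow> (nat \<Rightarrow> real)
    \<Rightarrow> (nat \<Rightarrow> nat \<Rightarrow> real) \<Rightarrow> (nat \<Rightarrow> nat \<Rightarrow> real) \<Rightarrow> real mat" where
  "DN N lam mu phi psi = mat (3*N) (3*N) (\<lambda>(r, c).
     let G = (if r < N then Fbar (r+1) else Fm N lam mu (r-N+1))
     in dphi G (c div N + 1) (c mod N + 1) phi psi)"

end

theory Submission
  imports Defs
begin

lemma pair_deriv:
  "((\<lambda>t. pairAB N lam mu k a b (phi(i := (phi i)(j := t))) psi) has_field_derivative
     (if a = i \<and> j \<in> {1..N} then lam j ^ k * mu j * psi b j else 0)) (at t0)"
proof -
  have "((\<lambda>t. \<Sum>j'=1..N. lam j' ^ k * (phi(i := (phi i)(j := t))) a j' * (mu j' * psi b j'))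
     has_field_derivative (\<Sum>j'=1..N. if a = i \<and> j' = j then lam j' ^ k * mu j' * psi b j' else 0)) (at t0)"
    apply (rule DERIV_sum)
    apply (cases "a = i"; cases "j' = j"; simp)
    apply (auto intro!: derivative_eq_intros)
    done
  moreover have "(\<Sum>j'=1..N. if a = i \<and> j' = j then lam j' ^ k * mu j' * psi b j' else 0)
     = (if a = i \<and> j \<in> {1..N} then lam j ^ k * mu j * psi b j else 0)"
    by (cases "a = i") (auto simp: sum.delta)
  ultimately show ?thesis unfolding pairAB_def by simp
qed

lemma dphi_Fm:
  "dphi (Fm N lam mu m) i j phi psi =
    (let p = (\<lambda>k a b. pairAB N lam mu k a b phi psi);
         q = (\<lambda>k a b. if a = i \<and> j \<in> {1..N} then lam j ^ k * mu j * psi b j else 0) in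
     if m = 1 then -8 * (q 0 1 1 - q 0 3 3)
     else 4 * (\<Sum>i'=1..m-1.
              (q (i'-1) 1 1 - q (i'-1) 3 3) * (p (m-i'-1) 1 1 - p (m-i'-1) 3 3)
            + (p (i'-1) 1 1 - p (i'-1) 3 3) * (q (m-i'-1) 1 1 - q (m-i'-1) 3 3)
            + 2 * (q (i'-1) 1 2 + q (i'-1) 2 3) * (p (m-i'-1) 2 1 + p (m-i'-1) 3 2)
            + 2 * (p (i'-1) 1 2 + p (i'-1) 2 3) * (q (m-i'-1) 2 1 + q (m-i'-1) 3 2))
          - 8 * (q (m-1) 1 1 - q (m-1) 3 3))"
proof -
  define U where "U = (\<lambda>t::real. phi(i := (phi i)(j := t)))"
  have U0: "U (phi i j) = phi" by (simp add: U_def)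
  have pd: "\<And>k a b. ((\<lambda>t. pairAB N lam mu k a b (U t) psi) has_field_derivative
     (if a = i \<and> j \<in> {1..N} then lam j ^ k * mu j * psi b j else 0)) (at (phi i j))"
    unfolding U_def by (rule pair_deriv)
  have "((\<lambda>t. Fm N lam mu m (U t) psi) has_field_derivative
    (let p = (\<lambda>k a b. pairAB N lam mu k a b (U (phi i j)) psi);
         q = (\<lambda>k a b. if a = i \<and> j \<in> {1..N} then lam j ^ k * mu j * psi b j else 0) in
     if m = 1 then -8 * (q 0 1 1 - q 0 3 3)
     else 4 * (\<Sum>i'=1..m-1.
              (q (i'-1) 1 1 - q (i'-1) 3 3) * (p (m-i'-1) 1 1 - p (m-i'-1) 3 3)
            + (p (i'-1) 1 1 - p (i'-1) 3 3) * (q (m-i'-1) 1 1 - q (m-i'-1) 3 3)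
            + 2 * (q (i'-1) 1 2 + q (i'-1) 2 3) * (p (m-i'-1) 2 1 + p (m-i'-1) 3 2)
            + 2 * (p (i'-1) 1 2 + p (i'-1) 2 3) * (q (m-i'-1) 2 1 + q (m-i'-1) 3 2))
          - 8 * (q (m-1) 1 1 - q (m-1) 3 3))) (at (phi i j))"
    unfolding Fm_def Let_def
    apply (cases "m = 1")
     apply (simp only: if_True simp_thms)
     apply (rule derivative_eq_intros pd refl)+
     apply (simp add: algebra_simps)
    apply (simp only: if_False simp_thms)
    apply (rule derivative_eq_intros DERIV_sum pd refl)+
    apply (simp add: algebra_simps)
    done
  note DERIV_imp_deriv[OF this]
  then show ?thesis unfolding dphi_def U_def fun_upd_triv .
qed

lemma dphi_Fbar:
  "dphi (Fbar k) i j phi psi = (if i \<in> {1..3} \<and> j = k then psi i j else 0)"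
proof -
  have "((\<lambda>t. \<Sum>i'=1..3. (phi(i := (phi i)(j := t))) i' k * psi i' k) has_field_derivative
     (\<Sum>i'=1..3. if i' = i \<and> j = k then psi i' k else 0)) (at (phi i j))"
    apply (rule DERIV_sum)
    subgoal for n by (cases "n = i"; cases "j = k"; auto intro!: derivative_eq_intros)
    done
  moreover have "(\<Sum>i'=1..3. if i' = i \<and> j = k then psi i' k else 0)
     = (if i \<in> {1..3} \<and> j = k then psi i j else 0)"
    by (cases "j = k") (auto simp: sum.delta)
  ultimately show ?thesis unfolding dphi_def Fbar_def
    using DERIV_imp_deriv by fastforce
qed

definition phi0 :: "nat \<Rightarrow> nat \<Rightarrow> real" where
  "phi0 i j = (if i = 2 then (if j = 1 then 1 else if j = 2 then -1 else 0) else 0)"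
definition psi0 :: "(nat \<Rightarrow> real) \<Rightarrow> nat \<Rightarrow> nat \<Rightarrow> real" where
  "psi0 mu i j = (if i = 2 then 0 else 1 / mu j)"

lemma DN_entry: "r < 3*N \<Longrightarrow> c < 3*N \<Longrightarrow> DN N lam mu phi psi $$ (r, c) =
   (if r < N then dphi (Fbar (r+1)) (c div N + 1) (c mod N + 1) phi psi
    else dphi (Fm N lam mu (r-N+1)) (c div N + 1) (c mod N + 1) phi psi)"
  unfolding DN_def by auto

lemma sum6: "(\<Sum>c<(6::nat). f c) = f 0 + f 1 + f 2 + f 3 + f 4 + (f 5::real)"
  by (simp add: eval_nat_numeral)
lemma sum3: "(\<Sum>c<(3::nat). f c) = f 0 + f 1 + (f 2::real)"
  by (simp add: eval_nat_numeral)
lemma sumI1: "(\<Sum>c=(1::nat)..1. f c) = (f 1::real)" by simp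
lemma sumI2: "(\<Sum>c=(1::nat)..2. f c) = f 1 + (f 2::real)"
  by (simp add: eval_nat_numeral)
lemma sumI3: "(\<Sum>c=(1::nat)..3. f c) = f 1 + f 2 + (f 3::real)"
  by (simp add: eval_nat_numeral)

lemma sumI1': "(\<Sum>c=Suc 0..Suc 0. f c) = (f 1::real)" by simp
lemma sumI2': "(\<Sum>c=Suc 0..2. f c) = f 1 + (f 2::real)"
  by (simp add: eval_nat_numeral)
lemma sumI3': "(\<Sum>c=Suc 0..3. f c) = f 1 + f 2 + (f 3::real)"
  by (simp add: eval_nat_numeral)

lemma case2:
  assumes "lam 1 \<noteq> lam 2" "mu 1 \<noteq> 0" "mu 2 \<noteq> 0"
  shows "det (DN 2 lam mu phi0 (psi0 mu)) \<noteq> 0"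
proof -
  let ?D = "DN 2 lam mu phi0 (psi0 mu)"
  have cD: "?D \<in> carrier_mat 6 6" unfolding DN_def by auto
  have "v = 0\<^sub>v 6" if v: "v \<in> carrier_vec 6" and Dv: "?D *\<^sub>v v = 0\<^sub>v 6" for v
  proof -
    have eq: "(\<Sum>c<6. ?D $$ (r,c) * v $ c) = 0" if "r < 6" for r
    proof -
      have "0 = (?D *\<^sub>v v) $ r" using Dv that by simp
      also have "\<dots> = row ?D r \<bullet> v" using cD that by simp
      also have "\<dots> = (\<Sum>c<6. ?D$$(r,c) * v$c)" unfolding scalar_prod_def using v cD that
        by (auto simp: lessThan_atLeast0 intro!: sum.cong)
      finally show ?thesis by simp
    qed
    have m2: "mu (Suc (Suc 0)) \<noteq> 0" "mu (Suc 0) \<noteq> 0" "mu 2 \<noteq> 0" using assms by (auto simp: numeral_2_eq_2)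
    note S = sum6 DN_entry dphi_Fbar dphi_Fm Let_def pairAB_def phi0_def psi0_def
      sumI1 sumI2 sumI3 sumI1' sumI2' sumI3'
    have l2: "lam 2 = lam (Suc (Suc 0))" by (simp add: numeral_2_eq_2)
    let ?l1 = "lam 1" and ?l2 = "lam (Suc (Suc 0))"
    have E0: "(v$0) + (v$4) = 0" using m2 eq[of 0] by (simp add: S field_simps)
    have E1: "(v$1) + (v$5) = 0" using m2 eq[of 1] by (simp add: S field_simps)
    have E2: "-8*(v$0) - 8*(v$1) + 8*(v$4) + 8*(v$5) = 0" using m2 eq[of 2] by (simp add: S)
    have E3: "-8*?l1*(v$0) - 8*?l2*(v$1) + 8*?l1*(v$4) + 8*?l2*(v$5) = 0" using m2 eq[of 3] by (simp add: S l2)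
    have E4: "-8*?l1^2*(v$0) - 8*?l2^2*(v$1) + 16*(?l1-?l2)*(v$2) + 16*(?l1-?l2)*(v$3)
       + 8*?l1^2*(v$4) + 8*?l2^2*(v$5) = 0" using m2 eq[of 4] by (simp add: S l2 algebra_simps power2_eq_square power3_eq_cube)
    have E5: "-8*?l1^3*(v$0) - 8*?l2^3*(v$1) + 16*(?l1^2-?l2^2+(?l1-?l2)*?l1)*(v$2)
       + 16*(?l1^2-?l2^2+(?l1-?l2)*?l2)*(v$3)
       + 8*?l1^3*(v$4) + 8*?l2^3*(v$5) = 0" using m2 eq[of 5] by (simp add: S l2 algebra_simps power2_eq_square power3_eq_cube)
    have d: "?l1 - ?l2 \<noteq> 0" using assms l2 by simp
    have v4: "v$4 = - v$0" and v5: "v$5 = - v$1" using E0 E1 by linarith+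
    have v1: "v$1 = - v$0" using E2 v4 v5 by linarith
    have "(?l1 - ?l2) * (v$0) = 0" using E3 unfolding v4 v5 v1 by (simp add: algebra_simps) metis
    then have z0: "v$0 = 0" using d by simp
    have "(?l1 - ?l2) * (v$2 + v$3) = 0" using E4 unfolding v4 v5 v1 z0 by (simp add: algebra_simps)
    then have v3: "v$3 = - v$2" using d by simp
    have "(?l1 - ?l2) * ((?l1 - ?l2) * v$2) = 0" using E5 unfolding v4 v5 v1 z0 v3
      by (simp add: algebra_simps power2_eq_square)
    then have z2: "v$2 = 0" using d by simp
    show ?thesis
    proof (rule eq_vecI)
      show "dim_vec v = dim_vec (0\<^sub>v 6)" using v by simp
      fix c assume "c < dim_vec (0\<^sub>v 6)"
      then have "c < 6" by simp
      then have "c = 0 \<or> c = 1 \<or> c = 2 \<or> c = 3 \<or> c = 4 \<or> c = 5" by linarith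
      then show "v $ c = 0\<^sub>v 6 $ c" using \<open>c < 6\<close> z0 z2 v1 v3 v4 v5 by auto
    qed
  qed
  then show ?thesis using det_0_iff_vec_prod_zero_field[OF cD] by blast
qed

lemma case1:
  assumes "mu 1 \<noteq> 0"
  shows "det (DN 1 lam mu phi0 (psi0 mu)) \<noteq> 0"
proof -
  let ?D = "DN 1 lam mu phi0 (psi0 mu)"
  have cD: "?D \<in> carrier_mat 3 3" unfolding DN_def by auto
  have "v = 0\<^sub>v 3" if v: "v \<in> carrier_vec 3" and Dv: "?D *\<^sub>v v = 0\<^sub>v 3" for v
  proof -
    have eq: "(\<Sum>c<3. ?D $$ (r,c) * v $ c) = 0" if "r < 3" for r
    proof -
      have "0 = (?D *\<^sub>v v) $ r" using Dv that by simp
      also have "\<dots> = row ?D r \<bullet> v" using cD that by simp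
      also have "\<dots> = (\<Sum>c<3. ?D$$(r,c) * v$c)" unfolding scalar_prod_def using v cD that
        by (auto simp: lessThan_atLeast0 intro!: sum.cong)
      finally show ?thesis by simp
    qed
    have m1: "mu (Suc 0) \<noteq> 0" using assms by simp
    note S = sum3 DN_entry dphi_Fbar dphi_Fm Let_def pairAB_def phi0_def psi0_def
      sumI1 sumI2 sumI3 sumI1' sumI2' sumI3'
    have E0: "(v$0) + (v$2) = 0" using m1 eq[of 0] by (simp add: S field_simps)
    have E1: "-8*(v$0) + 8*(v$2) = 0" using m1 eq[of 1] by (simp add: S)
    have E2: "-8*lam 1*(v$0) + 16*(v$1) + 8*lam 1*(v$2) = 0" using m1 eq[of 2] by (simp add: S)
    have z0: "v$0 = 0" and z2: "v$2 = 0" using E0 E1 by linarith+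
    have z1: "v$1 = 0" using E2 unfolding z0 z2 by simp
    show ?thesis
    proof (rule eq_vecI)
      show "dim_vec v = dim_vec (0\<^sub>v 3)" using v by simp
      fix c assume "c < dim_vec (0\<^sub>v 3)"
      then have "c < 3" by simp
      then have "c = 0 \<or> c = 1 \<or> c = 2" by linarith
      then show "v $ c = 0\<^sub>v 3 $ c" using \<open>c < 3\<close> z0 z1 z2 by auto
    qed
  qed
  then show ?thesis using det_0_iff_vec_prod_zero_field[OF cD] by blast
qed

theorem theorem3p3:
  fixes N :: nat and lam mu :: "nat \<Rightarrow> real"
  assumes "N \<in> {1, 2}"
    and "inj_on lam {1..N}"
    and "\<forall>j\<in>{1..N}. mu j \<noteq> 0"
  shows "\<exists>phi psi. det (DN N lam mu phi psi) \<noteq> 0"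
proof (cases "N = 1")
  case True
  then show ?thesis using assms(3) case1[of mu lam] by auto
next
  case False
  then have N: "N = 2" using assms(1) by auto
  have "lam 1 \<noteq> lam 2" using assms(2) unfolding N inj_on_def by force
  moreover have "mu 1 \<noteq> 0" "mu 2 \<noteq> 0" using assms(3) unfolding N by auto
  ultimately show ?thesis using case2[of lam mu] N by auto
qed

end
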